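(* In the Setting A below, suppose Assumption A2 holds. Then for every $k\in[K]$, $$\mathbb{E}\big[\|(\hat v^k)^{1/2}\|_1\big]\le n\theta,\qquad \mathbb{E}\big[\|m^k\|^2_{(\hat v^k)^{-1/2}}\big]\le\frac{\sqrt n\,(\theta+\hat P^k_z/\theta)}{(1-\beta_2)^{1/2}}.$$
   Context: Setting A. Problem: $\min_{x\in X} f_0(x)=\mathbb{E}_{\xi_0}[F_0(x;\xi_0)]$ s.t. $f_i(x)=\mathbb{E}_{\xi_i}[F_i(x;\xi_i)]\le0$, $i\in[M]$, where $X\subseteq\mathbb{R}^n$ is compact convex and $f_0,\dots,f_M$ are convex real-valued on $X$. Let $\mathbf f(x)=(f_1(x),\dots,f_M(x))^\top$, Lagrangian $\mathcal L(x,z)=f_0(x)+z^\top\mathbf f(x)$, and dual function $d(z)=\min_{x\in X}\mathcal L(x,z)$ for $z\ge0$. Vector operations $|x|$, $x^p$, $x/y$, $\max\{x,y\}$ are elementwise, with convention $0/0=0$; $[x]_+=\max\{x,0\}$; for $v\ge0$, $\langle x,y\rangle_v=\sum_i v_ix_iy_i$, $\|x\|_v^2=\langle x,x\rangle_v$, and $\mathrm{proj}_{X,v}(y)=\arg\min_{x\in X}\|x-y\|_v^2$; $\|\cdot\|$ is the Euclidean norm. Algorithm APriD: fix an integer $K$, $\beta_1,\beta_2\in(0,1)$, $\theta>0$, non-increasing step sizes $\alpha_1\ge\cdots\ge\alpha_K>0$, and $\rho_1>0$. Set $\eta_1=\alpha_1/(1-\beta_1)$ if $\alpha_k=\alpha_1$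 for all $k\in[K]$, else $\eta_1=\sum_{i=1}^K\alpha_i\beta_1^{i-1}$; for $k\ge2$ set $\eta_k=(\eta_{k-1}-\alpha_{k-1})/\beta_1$ and $\rho_k=\rho_{k-1}/(\beta_1+\alpha_{k-1}/\eta_k)$. Choose $x^1\in X$, $z^1\ge0$, $m^0=v^0=\hat v^0=0\in\mathbb{R}^n$. For $k=1,\dots,K$: obtain a random vector $(u^k,w^k)\in\mathbb{R}^n\times\mathbb{R}^M$ from a stochastic subgradient oracle of $\mathcal L$ at $(x^k,z^k)$, and set $m^k=\beta_1m^{k-1}+(1-\beta_1)u^k$; $\hat u^k=u^k/\max\{1,\|u^k\|/\theta\}$; $v^k=\beta_2v^{k-1}+(1-\beta_2)(\hat u^k)^2$; $\hat v^k=\max\{\hat v^{k-1},v^k\}$; $x^{k+1}=\mathrm{proj}_{X,(\hat v^k)^{1/2}}\big(x^k-\alpha_km^k/(\hat v^k)^{1/2}\big)$; $z^{k+1}=[z^k+\rho_kw^k]_+$. $\mathcal H^k$ denotes the history $\{x^1,z^1,\dots,x^k,z^k\}$. Assumption A1: there is $B$ with $\|x_1-x_2\|_\infty\le B$ for all $x_1,x_2\in X$. Assumption A2: there are constants $P,Q,F$ such that for all $k\in[K]$: $\mathbb{E}[u^k\mid\mathcal H^k]\in\partial_x\mathcal L(x^k,z^k)$, $\mathbb{E}[\|u^k\|^2]\le P\,\mathbb{E}[\|z^k\|^2]+Q$, $\mathbb{E}[w^k\mid\mathcal H^k]=\mathbf f(x^k)$, $\mathbb{E}[\|w^k\|^2]\le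 F^2$. Define $\hat P^k_z=P\max_{j\in[k]}\mathbb{E}[\|z^j\|^2]+Q$. Assumption A3: there is $(x^*,z^* )$ with $x^*\in X$ satisfying $0\in\partial f_0(x^* )+\mathcal N_X(x^* )+\sum_{i=1}^Mz_i^*\partial f_i(x^* )$, $f_i(x^* )\le0$, $z_i^*\ge0$, $z_i^*f_i(x^* )=0$ for $i\in[M]$ ($\mathcal N_X$ is the normal cone). *)

theory Defs
  imports "HOL-Analysis.Analysis" "HOL-Probability.Probability"
begin

definition wproj :: "(real^'n) set \<Rightarrow> real^'n \<Rightarrow> real^'n \<Rightarrow> real^'n" where
  "wproj X v y = (SOME x. is_arg_min (\<lambda>x. \<Sum>i\<in>UNIV. v$i * (x$i - y$i)^2) (\<lambda>x. x \<in> X) x)"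

definition eta1 :: "nat \<Rightarrow> (nat \<Rightarrow> real) \<Rightarrow> real \<Rightarrow> real" where
  "eta1 K \<alpha> \<beta>1 = (if (\<forall>k\<in>{1..K}. \<alpha> k = \<alpha> 1) then \<alpha> 1 / (1 - \<beta>1)
                   else (\<Sum>i=1..K. \<alpha> i * \<beta>1 ^ (i - 1)))"

text \<open>eta_rho K alpha beta1 rho1 j = (eta_{j+1}, rho_{j+1}).\<close>
primrec eta_rho :: "nat \<Rightarrow> (nat \<Rightarrow> real) \<Rightarrow> real \<Rightarrow> real \<Rightarrow> nat \<Rightarrow> real \<times> real" where
  "eta_rho K \<alpha> \<beta>1 \<rho>1 0 = (eta1 K \<alpha> \<beta>1, \<rho>1)"
| "eta_rho K \<alpha> \<beta>1 \<rho>1 (Suc j) =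
     (let (\<eta>, \<rho>) = eta_rho K \<alpha> \<beta>1 \<rho>1 j;
          \<eta>' = (\<eta> - \<alpha> (Suc j)) / \<beta>1
      in (\<eta>', \<rho> / (\<beta>1 + \<alpha> (Suc j) / \<eta>')))"

definition rho :: "nat \<Rightarrow> (nat \<Rightarrow> real) \<Rightarrow> real \<Rightarrow> real \<Rightarrow> nat \<Rightarrow> real" where
  "rho K \<alpha> \<beta>1 \<rho>1 k = snd (eta_rho K \<alpha> \<beta>1 \<rho>1 (k - 1))"

text \<open>APriD along one sample path (u^k, w^k)_k.
  apd_state ... j = (x^{j+1}, z^{j+1}, m^j, v^j, vhat^j); apd_state ... 0 = (x^1, z^1, 0, 0, 0).
  Division by zero yields 0 in Isabelle, matching the convention 0/0 = 0.\<close>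
primrec apd_state :: "nat \<Rightarrow> (real^'n) set \<Rightarrow> (nat \<Rightarrow> real) \<Rightarrow> real \<Rightarrow> real \<Rightarrow> real \<Rightarrow> real
    \<Rightarrow> real^'n \<Rightarrow> real^'m \<Rightarrow> (nat \<Rightarrow> real^'n) \<Rightarrow> (nat \<Rightarrow> real^'m) \<Rightarrow> nat
    \<Rightarrow> (real^'n) \<times> (real^'m) \<times> (real^'n) \<times> (real^'n) \<times> (real^'n)" where
  "apd_state K X \<alpha> \<beta>1 \<beta>2 \<theta> \<rho>1 x1 z1 u w 0 = (x1, z1, 0, 0, 0)"
| "apd_state K X \<alpha> \<beta>1 \<beta>2 \<theta> \<rho>1 x1 z1 u w (Suc j) =
     (let (x, z, m, v, vh) = apd_state K X \<alpha> \<beta>1 \<beta>2 \<theta> \<rho>1 x1 z1 u w j;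
          k = Suc j;
          m' = \<beta>1 *\<^sub>R m + (1 - \<beta>1) *\<^sub>R u k;
          uh = (1 / max 1 (norm (u k) / \<theta>)) *\<^sub>R u k;
          v' = \<beta>2 *\<^sub>R v + (1 - \<beta>2) *\<^sub>R (\<chi> i. (uh$i)^2);
          vh' = (\<chi> i. max (vh$i) (v'$i));
          sq = (\<chi> i. sqrt (vh'$i));
          x' = wproj X sq (\<chi> i. x$i - \<alpha> k * m'$i / sq$i);
          z' = (\<chi> i. max 0 (z$i + rho K \<alpha> \<beta>1 \<rho>1 k * w k $ i))
      in (x', z', m', v', vh'))"

definition apd_path where
  "apd_path K X \<alpha> \<beta>1 \<beta>2 \<theta> \<rho>1 x1 z1 (u :: nat \<Rightarrow> 'w \<Rightarrow> real^'n) (w :: nat \<Rightarrow> 'w \<Rightarrow> real^'m) j \<omega>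
     = apd_state K X \<alpha> \<beta>1 \<beta>2 \<theta> \<rho>1 x1 z1 (\<lambda>i. u i \<omega>) (\<lambda>i. w i \<omega>) j"

definition apd_x where
  "apd_x K X \<alpha> \<beta>1 \<beta>2 \<theta> \<rho>1 x1 z1 u w k \<omega> = fst (apd_path K X \<alpha> \<beta>1 \<beta>2 \<theta> \<rho>1 x1 z1 u w (k - 1) \<omega>)"
definition apd_z where
  "apd_z K X \<alpha> \<beta>1 \<beta>2 \<theta> \<rho>1 x1 z1 u w k \<omega> = fst (snd (apd_path K X \<alpha> \<beta>1 \<beta>2 \<theta> \<rho>1 x1 z1 u w (k - 1) \<omega>))"
definition apd_m where
  "apd_m K X \<alpha> \<beta>1 \<beta>2 \<theta> \<rho>1 x1 z1 u w k \<omega> = fst (snd (snd (apd_path K X \<alpha> \<beta>1 \<beta>2 \<theta> \<rho>1 x1 z1 u w k \<omega>)))"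
definition apd_vhat where
  "apd_vhat K X \<alpha> \<beta>1 \<beta>2 \<theta> \<rho>1 x1 z1 u w k \<omega> = snd (snd (snd (snd (apd_path K X \<alpha> \<beta>1 \<beta>2 \<theta> \<rho>1 x1 z1 u w k \<omega>))))"

definition lagr :: "(real^'n \<Rightarrow> real) \<Rightarrow> (real^'n \<Rightarrow> real^'m) \<Rightarrow> real^'n \<Rightarrow> real^'m \<Rightarrow> real" where
  "lagr f0 f x z = f0 x + z \<bullet> f x"

definition subdiff_x :: "(real^'n) set \<Rightarrow> (real^'n \<Rightarrow> real) \<Rightarrow> (real^'n \<Rightarrow> real^'m)
    \<Rightarrow> real^'n \<Rightarrow> real^'m \<Rightarrow> (real^'n) set" where
  "subdiff_x X f0 f x z = {g. \<forall>y\<in>X. lagr f0 f y z \<ge> lagr f0 f x z + g \<bullet> (y - x)}"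

definition hist :: "'w measure \<Rightarrow> (nat \<Rightarrow> 'w \<Rightarrow> real^'n) \<Rightarrow> (nat \<Rightarrow> 'w \<Rightarrow> real^'m) \<Rightarrow> nat \<Rightarrow> 'w measure" where
  "hist Mp xs zs k = sigma (space Mp)
     ((\<Union>j\<in>{1..k}. {xs j -` A \<inter> space Mp | A. A \<in> sets borel}) \<union>
      (\<Union>j\<in>{1..k}. {zs j -` A \<inter> space Mp | A. A \<in> sets borel}))"

end

theory Submission
  imports Defs
begin
lemma l1_le_sqrt_card:
  fixes u :: "real^'n"
  shows "(\<Sum>i\<in>UNIV. \<bar>u$i\<bar>) \<le> sqrt (real CARD('n)) * norm u"
proof -
  define a :: "real^'n" where "a = (\<chi> i. \<bar>u$i\<bar>)"
  define one_v :: "real^'n" where "one_v = (\<chi> i. 1)"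
  have "a \<bullet> one_v = (\<Sum>i\<in>UNIV. \<bar>u$i\<bar>)" by (simp add: a_def one_v_def inner_vec_def)
  moreover have "norm a = norm u" by (simp add: a_def norm_vec_def)
  moreover have "norm one_v = sqrt (real CARD('n))"
    by (simp add: norm_eq_sqrt_inner one_v_def inner_vec_def)
  ultimately show ?thesis using norm_cauchy_schwarz[of a one_v] by (simp add: mult.commute)
qed

lemma uh_bound:
  fixes u :: "real^'n" and vh :: "real^'n"
  assumes th: "0 < \<theta>" and b2: "\<beta>2 < 1"
    and vh: "\<And>i. (1 - \<beta>2) * (((1 / max 1 (norm u / \<theta>)) *\<^sub>R u) $ i)^2 \<le> vh $ i"
  shows "(\<Sum>i\<in>UNIV. (u $ i)^2 / sqrt (vh $ i)) \<le> sqrt (real CARD('n)) * (\<theta> + (norm u)^2 / \<theta>) / sqrt (1 - \<beta>2)"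
proof -
  define s where "s = max 1 (norm u / \<theta>)"
  have s1: "s \<ge> 1" by (simp add: s_def)
  have c: "sqrt (1-\<beta>2) > 0" using b2 by simp
  have each: "(u $ i)^2 / sqrt (vh $ i) \<le> s * \<bar>u$i\<bar> / sqrt (1-\<beta>2)" for i
  proof (cases "u$i = 0")
    case True then show ?thesis by simp
  next
    case False
    have "(1 - \<beta>2) * (u$i / s)^2 \<le> vh $ i" using vh[of i] by (simp add: s_def divide_inverse mult.commute)
    hence "sqrt ((1 - \<beta>2) * (u$i / s)^2) \<le> sqrt (vh $ i)" by (rule real_sqrt_le_mono)
    hence le: "sqrt (1-\<beta>2) * (\<bar>u$i\<bar> / s) \<le> sqrt (vh$i)" using s1 by (simp add: real_sqrt_mult)
    have pos: "0 < sqrt (1-\<beta>2) * (\<bar>u$i\<bar> / s)" using c False s1 by simp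
    have "(u $ i)^2 / sqrt (vh $ i) \<le> (u $ i)^2 / (sqrt (1-\<beta>2) * (\<bar>u$i\<bar> / s))"
      proof (rule divide_left_mono[OF le])
      have "0 < sqrt (vh$i)" using pos le by linarith
      then show "0 < sqrt (vh $ i) * (sqrt (1-\<beta>2) * (\<bar>u$i\<bar> / s))" using False s1 c by (intro mult_pos_pos) auto
    qed simp
    also have "\<dots> = s * \<bar>u$i\<bar> / sqrt (1-\<beta>2)" using False s1 c
      by (simp add: field_simps power2_eq_square abs_mult_self_eq)
    finally show ?thesis .
  qed
  have "(\<Sum>i\<in>UNIV. (u $ i)^2 / sqrt (vh $ i)) \<le> (\<Sum>i\<in>UNIV. s * \<bar>u$i\<bar> / sqrt (1-\<beta>2))"
    by (rule sum_mono) (rule each)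
  also have "\<dots> = s * (\<Sum>i\<in>UNIV. \<bar>u$i\<bar>) / sqrt (1-\<beta>2)"
    by (simp add: sum_divide_distrib sum_distrib_left)
  also have "\<dots> \<le> s * (sqrt (real CARD('n)) * norm u) / sqrt (1-\<beta>2)"
    using l1_le_sqrt_card[of u] s1 c by (intro divide_right_mono mult_left_mono) auto
  also have "\<dots> = sqrt (real CARD('n)) * (s * norm u) / sqrt (1-\<beta>2)" by simp
  also have "\<dots> \<le> sqrt (real CARD('n)) * (\<theta> + (norm u)^2 / \<theta>) / sqrt (1-\<beta>2)"
  proof -
    have "s * norm u \<le> \<theta> + (norm u)^2 / \<theta>"
    proof (cases "norm u / \<theta> \<le> 1")
      case True
      hence "norm u \<le> \<theta>" using th by (simp add: divide_le_eq)
      moreover have "s = 1" using True by (simp add: s_def)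
      ultimately show ?thesis using th by (simp add: add_increasing2)
    next
      case False
      hence "s = norm u / \<theta>" by (simp add: s_def)
      then show ?thesis using th by (simp add: power2_eq_square)
    qed
    then show ?thesis using c by (intro divide_right_mono mult_left_mono) auto
  qed
  finally show ?thesis .
qed

definition uhat :: "real \<Rightarrow> real^'n \<Rightarrow> real^'n" where
  "uhat \<theta> u = (1 / max 1 (norm u / \<theta>)) *\<^sub>R u"

lemma uhat_comp_sq: "0 < \<theta> \<Longrightarrow> (uhat \<theta> u $ i)^2 \<le> \<theta>^2"
proof -
  assume th: "0 < \<theta>"
  have "norm (uhat \<theta> u) \<le> \<theta>"
  proof (cases "norm u / \<theta> \<le> 1")
    case True then show ?thesis using th by (simp add: uhat_def divide_le_eq)
  next
    case False
    hence "max 1 (norm u / \<theta>) = norm u / \<theta>" by simp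
    moreover have "norm u > 0" using False th by (auto simp: divide_le_eq)
    ultimately show ?thesis using th by (simp add: uhat_def)
  qed
  hence "\<bar>uhat \<theta> u $ i\<bar> \<le> \<theta>" using component_le_norm_cart order_trans by blast
  thus ?thesis using abs_le_square_iff th by (metis abs_of_pos)
qed

lemma apd_inv:
  fixes u :: "nat \<Rightarrow> real^'n" and w :: "nat \<Rightarrow> real^'m" and K :: nat and X :: "(real^'n) set"
    and \<alpha> :: "nat \<Rightarrow> real" and \<rho>1 :: real and x1 :: "real^'n" and z1 :: "real^'m"
  assumes b1: "0 < \<beta>1" "\<beta>1 < 1" and b2: "0 < \<beta>2" "\<beta>2 < 1" and th: "0 < \<theta>"
  defines "st \<equiv> apd_state K X \<alpha> \<beta>1 \<beta>2 \<theta> \<rho>1 x1 z1 u w"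
  shows "(\<forall>i. 0 \<le> fst (snd (snd (snd (st k)))) $ i \<and> fst (snd (snd (snd (st k)))) $ i \<le> \<theta>^2
             \<and> snd (snd (snd (snd (st k)))) $ i \<le> \<theta>^2)
       \<and> (\<forall>i. \<forall>j\<in>{1..k}. (1-\<beta>2) * (uhat \<theta> (u j) $ i)^2 \<le> snd (snd (snd (snd (st k)))) $ i)
       \<and> (\<forall>i. (fst (snd (snd (st k))) $ i)^2 \<le> (\<Sum>j=1..k. (1-\<beta>1) * \<beta>1^(k-j) * (u j $ i)^2))"
proof (induction k)
  case 0 then show ?case by (simp add: st_def)
next
  case (Suc k)
  obtain x z m v vh where e: "st k = (x, z, m, v, vh)" by (cases "st k") auto
  have IH1: "\<And>i. 0 \<le> v $ i \<and> v $ i \<le> \<theta>^2 \<and> vh $ i \<le> \<theta>^2"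
   and IH2: "\<And>i j. j\<in>{1..k} \<Longrightarrow> (1-\<beta>2) * (uhat \<theta> (u j) $ i)^2 \<le> vh $ i"
   and IH3: "\<And>i. (m $ i)^2 \<le> (\<Sum>j=1..k. (1-\<beta>1) * \<beta>1^(k-j) * (u j $ i)^2)"
    using Suc.IH e by auto
  define m' where "m' = \<beta>1 *\<^sub>R m + (1 - \<beta>1) *\<^sub>R u (Suc k)"
  define v' :: "real^'n" where "v' = \<beta>2 *\<^sub>R v + (1 - \<beta>2) *\<^sub>R (\<chi> i. (uhat \<theta> (u (Suc k)) $ i)^2)"
  define vh' :: "real^'n" where "vh' = (\<chi> i. max (vh$i) (v'$i))"
  have st: "fst (snd (snd (st (Suc k)))) = m'" "fst (snd (snd (snd (st (Suc k))))) = v'"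
      "snd (snd (snd (snd (st (Suc k))))) = vh'"
    using e unfolding st_def by (simp_all add: Let_def m'_def v'_def vh'_def uhat_def)
  have A: "0 \<le> v' $ i \<and> v' $ i \<le> \<theta>^2 \<and> vh' $ i \<le> \<theta>^2" for i
  proof -
    have a: "0 \<le> v$i" "v$i \<le> \<theta>^2" "vh$i \<le> \<theta>^2" using IH1[of i] by auto
    have b: "(uhat \<theta> (u (Suc k)) $ i)^2 \<le> \<theta>^2" using uhat_comp_sq th by blast
    have v'i: "v' $ i = \<beta>2 * v$i + (1-\<beta>2) * (uhat \<theta> (u (Suc k)) $ i)^2" by (simp add: v'_def)
    have "\<beta>2 * v$i + (1-\<beta>2) * (uhat \<theta> (u (Suc k)) $ i)^2 \<le> \<beta>2 * \<theta>^2 + (1-\<beta>2) * \<theta>^2"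
      using a b b2 by (intro add_mono mult_left_mono) auto
    hence "v' $ i \<le> \<theta>^2" using v'i by (simp add: algebra_simps)
    moreover have "0 \<le> v' $ i" using v'i a b2 by simp
    ultimately show ?thesis using a by (simp add: vh'_def)
  qed
  have B: "(1-\<beta>2) * (uhat \<theta> (u j) $ i)^2 \<le> vh' $ i" if j: "j \<in> {1..Suc k}" for i j
  proof (cases "j = Suc k")
    case True
    have "(1-\<beta>2) * (uhat \<theta> (u j) $ i)^2 \<le> v' $ i" using True IH1[of i] b2 by (simp add: v'_def)
    then show ?thesis by (simp add: vh'_def)
  next
    case False
    hence "j \<in> {1..k}" using j by auto
    then show ?thesis using IH2[of j i] by (simp add: vh'_def)
  qed
  have C: "(m' $ i)^2 \<le> (\<Sum>j=1..Suc k. (1-\<beta>1) * \<beta>1^(Suc k-j) * (u j $ i)^2)" for i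
  proof -
    have "(m' $ i)^2 = (\<beta>1 * m$i + (1-\<beta>1) * u (Suc k) $ i)^2" by (simp add: m'_def)
    also have "\<dots> \<le> \<beta>1 * (m$i)^2 + (1-\<beta>1) * (u (Suc k) $ i)^2"
    proof -
      have "0 \<le> \<beta>1 * (1-\<beta>1) * (m$i - u (Suc k) $ i)^2" using b1 by simp
      then show ?thesis by (simp add: power2_eq_square algebra_simps)
    qed
    also have "\<dots> \<le> \<beta>1 * (\<Sum>j=1..k. (1-\<beta>1) * \<beta>1^(k-j) * (u j $ i)^2) + (1-\<beta>1) * (u (Suc k) $ i)^2"
      using IH3[of i] b1 by simp
    also have "\<dots> = (\<Sum>j=1..Suc k. (1-\<beta>1) * \<beta>1^(Suc k-j) * (u j $ i)^2)"
    proof -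
      have "\<beta>1 * (\<Sum>j=1..k. (1-\<beta>1) * \<beta>1^(k-j) * (u j $ i)^2) = (\<Sum>j=1..k. (1-\<beta>1) * \<beta>1^(Suc k-j) * (u j $ i)^2)"
        unfolding sum_distrib_left
        by (rule sum.cong) (auto simp: Suc_diff_le)
      then show ?thesis by simp
    qed
    finally show ?thesis .
  qed
  show ?case using A B C st by auto
qed

lemma geo_sum: "(\<Sum>j=1..k. (1-\<beta>1) * \<beta>1^(k-j)) = 1 - (\<beta>1::real)^k"
proof (induction k)
  case 0 then show ?case by simp
next
  case (Suc k)
  have "(\<Sum>j=1..k. (1-\<beta>1) * \<beta>1^(Suc k-j)) = \<beta>1 * (\<Sum>j=1..k. (1-\<beta>1) * \<beta>1^(k-j))"
    unfolding sum_distrib_left by (rule sum.cong) (auto simp: Suc_diff_le)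
  have "(\<Sum>j=1..Suc k. (1-\<beta>1) * \<beta>1^(Suc k-j)) = (\<Sum>j=1..k. (1-\<beta>1) * \<beta>1^(Suc k-j)) + (1-\<beta>1)"
    by simp
  also have "\<dots> = \<beta>1 * (1 - \<beta>1^k) + (1-\<beta>1)" using Suc.IH \<open>_ = \<beta>1 * _\<close> by simp
  also have "\<dots> = 1 - \<beta>1^Suc k" by (simp add: algebra_simps)
  finally show ?case .
qed

theorem lemma4:
  fixes Mp :: "'w measure"
    and X :: "(real^'n) set"
    and f0 :: "real^'n \<Rightarrow> real" and f :: "real^'n \<Rightarrow> real^'m"
    and K :: nat and \<alpha> :: "nat \<Rightarrow> real" and \<beta>1 \<beta>2 \<theta> \<rho>1 :: real
    and x1 :: "real^'n" and z1 :: "real^'m"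
    and u :: "nat \<Rightarrow> 'w \<Rightarrow> real^'n" and w :: "nat \<Rightarrow> 'w \<Rightarrow> real^'m"
    and P Q F :: real
  defines "xs \<equiv> apd_x K X \<alpha> \<beta>1 \<beta>2 \<theta> \<rho>1 x1 z1 u w"
    and "zs \<equiv> apd_z K X \<alpha> \<beta>1 \<beta>2 \<theta> \<rho>1 x1 z1 u w"
    and "ms \<equiv> apd_m K X \<alpha> \<beta>1 \<beta>2 \<theta> \<rho>1 x1 z1 u w"
    and "vhs \<equiv> apd_vhat K X \<alpha> \<beta>1 \<beta>2 \<theta> \<rho>1 x1 z1 u w"
    and "Phat \<equiv> \<lambda>k. P * Max ((\<lambda>j. \<integral>\<omega>. (norm (apd_z K X \<alpha> \<beta>1 \<beta>2 \<theta> \<rho>1 x1 z1 u w j \<omega>))\<^sup>2 \<partial>Mp) ` {1..k}) + Q"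
  assumes "prob_space Mp"
    \<comment> \<open>Setting A\<close>
    and "compact X" and "convex X"
    and "convex_on X f0" and "\<forall>i. convex_on X (\<lambda>x. f x $ i)"
    and "0 < \<beta>1" and "\<beta>1 < 1" and "0 < \<beta>2" and "\<beta>2 < 1" and "0 < \<theta>"
    and "\<forall>i j. 1 \<le> i \<longrightarrow> i \<le> j \<longrightarrow> j \<le> K \<longrightarrow> \<alpha> j \<le> \<alpha> i"
    and "\<forall>k\<in>{1..K}. 0 < \<alpha> k"
    and "0 < \<rho>1"
    and "x1 \<in> X" and "\<forall>i. 0 \<le> z1 $ i"
    and "\<forall>k\<in>{1..K}. u k \<in> borel_measurable Mp \<and> w k \<in> borel_measurable Mp"
    \<comment> \<open>Assumption A2\<close>
    and "0 \<le> P"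
    and "\<forall>k\<in>{1..K}. AE \<omega> in Mp.
           (\<chi> i. real_cond_exp Mp (hist Mp xs zs k) (\<lambda>\<omega>'. u k \<omega>' $ i) \<omega>)
             \<in> subdiff_x X f0 f (xs k \<omega>) (zs k \<omega>)"
    and "\<forall>k\<in>{1..K}. integrable Mp (\<lambda>\<omega>. (norm (u k \<omega>))\<^sup>2) \<and>
           (\<integral>\<omega>. (norm (u k \<omega>))\<^sup>2 \<partial>Mp) \<le> P * (\<integral>\<omega>. (norm (zs k \<omega>))\<^sup>2 \<partial>Mp) + Q"
    and "\<forall>k\<in>{1..K}. AE \<omega> in Mp.
           (\<chi> i. real_cond_exp Mp (hist Mp xs zs k) (\<lambda>\<omega>'. w k \<omega>' $ i) \<omega>) = f (xs k \<omega>)"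
    and "\<forall>k\<in>{1..K}. integrable Mp (\<lambda>\<omega>. (norm (w k \<omega>))\<^sup>2) \<and>
           (\<integral>\<omega>. (norm (w k \<omega>))\<^sup>2 \<partial>Mp) \<le> F\<^sup>2"
  shows "\<forall>k\<in>{1..K}.
           (\<integral>\<^sup>+\<omega>. ennreal (\<Sum>i\<in>UNIV. \<bar>sqrt (vhs k \<omega> $ i)\<bar>) \<partial>Mp)
              \<le> ennreal (real CARD('n) * \<theta>)
         \<and> (\<integral>\<^sup>+\<omega>. ennreal (\<Sum>i\<in>UNIV. (ms k \<omega> $ i)\<^sup>2 / sqrt (vhs k \<omega> $ i)) \<partial>Mp)
              \<le> ennreal (sqrt (real CARD('n)) * (\<theta> + Phat k / \<theta>) / sqrt (1 - \<beta>2))"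
proof
  fix k assume k: "k \<in> {1..K}"
  note ps = \<open>prob_space Mp\<close>
  have b1: "0 < \<beta>1" "\<beta>1 < 1" and b2: "0 < \<beta>2" "\<beta>2 < 1" and th: "0 < \<theta>" using assms by auto
  define st where "st = (\<lambda>\<omega>. apd_state K X \<alpha> \<beta>1 \<beta>2 \<theta> \<rho>1 x1 z1 (\<lambda>i. u i \<omega>) (\<lambda>i. w i \<omega>) k)"
  have vhs_eq: "vhs k \<omega> = snd (snd (snd (snd (st \<omega>))))" for \<omega>
    by (simp add: vhs_def st_def apd_vhat_def apd_path_def)
  have ms_eq: "ms k \<omega> = fst (snd (snd (st \<omega>)))" for \<omega>
    by (simp add: ms_def st_def apd_m_def apd_path_def)
  have inv: "(\<forall>i. vhs k \<omega> $ i \<le> \<theta>^2)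
       \<and> (\<forall>i. \<forall>j\<in>{1..k}. (1-\<beta>2) * (uhat \<theta> (u j \<omega>) $ i)^2 \<le> vhs k \<omega> $ i)
       \<and> (\<forall>i. (ms k \<omega> $ i)^2 \<le> (\<Sum>j=1..k. (1-\<beta>1) * \<beta>1^(k-j) * (u j \<omega> $ i)^2))" for \<omega>
    using apd_inv[OF b1 b2 th, of K X \<alpha> \<rho>1 x1 z1 "\<lambda>i. u i \<omega>" "\<lambda>i. w i \<omega>" k]
    unfolding vhs_eq ms_eq st_def by auto
  have k1: "k \<in> {1..k}" using k by auto
  have vpos: "0 \<le> vhs k \<omega> $ i" for \<omega> i
  proof -
    have "(1-\<beta>2) * (uhat \<theta> (u k \<omega>) $ i)^2 \<le> vhs k \<omega> $ i" using inv[of \<omega>] k1 by blast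
    moreover have "0 \<le> (1-\<beta>2) * (uhat \<theta> (u k \<omega>) $ i)^2" using b2 by simp
    ultimately show ?thesis by linarith
  qed
  have n0: "0 \<le> real CARD('n) * \<theta>" using th by simp
  have P1: "(\<integral>\<^sup>+\<omega>. ennreal (\<Sum>i\<in>UNIV. \<bar>sqrt (vhs k \<omega> $ i)\<bar>) \<partial>Mp) \<le> ennreal (real CARD('n) * \<theta>)"
  proof -
    have "(\<integral>\<^sup>+\<omega>. ennreal (\<Sum>i\<in>UNIV. \<bar>sqrt (vhs k \<omega> $ i)\<bar>) \<partial>Mp) \<le> (\<integral>\<^sup>+\<omega>. ennreal (real CARD('n) * \<theta>) \<partial>Mp)"
    proof (rule nn_integral_mono)
      fix \<omega>
      have "\<bar>sqrt (vhs k \<omega> $ i)\<bar> \<le> \<theta>" for i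
      proof -
        have "sqrt (vhs k \<omega> $ i) \<le> sqrt (\<theta>^2)" using inv[of \<omega>] by (intro real_sqrt_le_mono) auto
        then show ?thesis using th vpos[of \<omega> i] by simp
      qed
      hence "(\<Sum>i\<in>UNIV. \<bar>sqrt (vhs k \<omega> $ i)\<bar>) \<le> (\<Sum>i\<in>(UNIV::'n set). \<theta>)" by (intro sum_mono)
      then show "ennreal (\<Sum>i\<in>UNIV. \<bar>sqrt (vhs k \<omega> $ i)\<bar>) \<le> ennreal (real CARD('n) * \<theta>)"
        by (simp add: ennreal_leI)
    qed
    also have "\<dots> = ennreal (real CARD('n) * \<theta>)"
      using prob_space.emeasure_space_1[OF ps] by simp
    finally show ?thesis .
  qed
  define A where "A = sqrt (real CARD('n)) / sqrt (1 - \<beta>2)"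
  have A0: "0 \<le> A" using b2 by (simp add: A_def)
  define c where "c = (\<lambda>j. (1-\<beta>1) * \<beta>1^(k-j))"
  have c0: "0 \<le> c j" for j using b1 by (simp add: c_def)
  define g where "g = (\<lambda>\<omega>. \<Sum>j=1..k. c j * (A * \<theta> + (A / \<theta>) * (norm (u j \<omega>))^2))"
  have pw: "(\<Sum>i\<in>UNIV. (ms k \<omega> $ i)\<^sup>2 / sqrt (vhs k \<omega> $ i)) \<le> g \<omega>" for \<omega>
  proof -
    have "(\<Sum>i\<in>UNIV. (ms k \<omega> $ i)\<^sup>2 / sqrt (vhs k \<omega> $ i))
        \<le> (\<Sum>i\<in>UNIV. (\<Sum>j=1..k. c j * (u j \<omega> $ i)^2) / sqrt (vhs k \<omega> $ i))"
      using inv[of \<omega>] vpos[of \<omega>] by (intro sum_mono divide_right_mono) (auto simp: c_def)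
    also have "\<dots> = (\<Sum>j=1..k. c j * (\<Sum>i\<in>UNIV. (u j \<omega> $ i)^2 / sqrt (vhs k \<omega> $ i)))"
      by (simp add: sum_divide_distrib sum_distrib_left sum.swap[of _ UNIV] mult.assoc)
    also have "\<dots> \<le> g \<omega>"
      unfolding g_def
    proof (rule sum_mono)
      fix j assume j: "j \<in> {1..k}"
      have "(\<Sum>i\<in>UNIV. (u j \<omega> $ i)^2 / sqrt (vhs k \<omega> $ i))
           \<le> sqrt (real CARD('n)) * (\<theta> + (norm (u j \<omega>))^2 / \<theta>) / sqrt (1 - \<beta>2)"
        using inv[of \<omega>] j by (intro uh_bound th b2) (auto simp: uhat_def)
      also have "\<dots> = A * \<theta> + (A / \<theta>) * (norm (u j \<omega>))^2"
        by (simp add: A_def add_divide_distrib distrib_left)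
      finally show "c j * (\<Sum>i\<in>UNIV. (u j \<omega> $ i)^2 / sqrt (vhs k \<omega> $ i)) \<le> c j * (A * \<theta> + (A / \<theta>) * (norm (u j \<omega>))^2)"
        using c0 by (intro mult_left_mono) auto
    qed
    finally show ?thesis .
  qed
  have intu: "j \<in> {1..k} \<Longrightarrow> integrable Mp (\<lambda>\<omega>. (norm (u j \<omega>))\<^sup>2)" for j
    using assms(24) k by auto
  interpret prob_space Mp by (rule ps)
  have intg: "integrable Mp g" unfolding g_def
  proof (rule Bochner_Integration.integrable_sum)
    fix j assume "j \<in> {1..k}"
    then show "integrable Mp (\<lambda>\<omega>. c j * (A * \<theta> + A / \<theta> * (norm (u j \<omega>))\<^sup>2))"
      using intu by (intro integrable_mult_right integrable_add) auto
  qed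
  have g0: "0 \<le> g \<omega>" for \<omega> unfolding g_def using c0 A0 th by (intro sum_nonneg mult_nonneg_nonneg add_nonneg_nonneg) auto
  define Ph where "Ph = Phat k"
  have Eu: "(\<integral>\<omega>. (norm (u j \<omega>))\<^sup>2 \<partial>Mp) \<le> Ph" if j: "j \<in> {1..k}" for j
  proof -
    have "(\<integral>\<omega>. (norm (u j \<omega>))\<^sup>2 \<partial>Mp) \<le> P * (\<integral>\<omega>. (norm (zs j \<omega>))\<^sup>2 \<partial>Mp) + Q"
      using assms(24) j k by auto
    also have "\<dots> \<le> Ph"
      unfolding Ph_def Phat_def zs_def using j assms(22)
      by (intro add_right_mono mult_left_mono Max_ge) auto
    finally show ?thesis .
  qed
  have Ph0: "0 \<le> Ph" using Eu[OF k1] integral_nonneg_AE[of "\<lambda>\<omega>. (norm (u k \<omega>))\<^sup>2" Mp] by (smt (verit) AE_I2 zero_le_power2)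
  have "integral\<^sup>L Mp g = (\<Sum>j=1..k. c j * (A * \<theta> + (A / \<theta>) * (\<integral>\<omega>. (norm (u j \<omega>))\<^sup>2 \<partial>Mp)))"
    unfolding g_def
  proof (subst Bochner_Integration.integral_sum)
    fix j assume j: "j \<in> {1..k}"
    show "integrable Mp (\<lambda>\<omega>. c j * (A * \<theta> + A / \<theta> * (norm (u j \<omega>))\<^sup>2))"
      using intu[OF j] by (intro integrable_mult_right integrable_add) auto
  next
    show "(\<Sum>j = 1..k. \<integral>\<omega>. c j * (A * \<theta> + A / \<theta> * (norm (u j \<omega>))\<^sup>2) \<partial>Mp) =
      (\<Sum>j = 1..k. c j * (A * \<theta> + A / \<theta> * (\<integral>\<omega>. (norm (u j \<omega>))\<^sup>2 \<partial>Mp)))"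
    proof (rule sum.cong)
      fix j assume j: "j \<in> {1..k}"
      show "(\<integral>\<omega>. c j * (A * \<theta> + A / \<theta> * (norm (u j \<omega>))\<^sup>2) \<partial>Mp) =
        c j * (A * \<theta> + A / \<theta> * (\<integral>\<omega>. (norm (u j \<omega>))\<^sup>2 \<partial>Mp))"
        using intu[OF j] by (simp add: Bochner_Integration.integral_add prob_space)
    qed simp
  qed
  also have "\<dots> \<le> (\<Sum>j=1..k. c j * (A * \<theta> + (A / \<theta>) * Ph))"
    using Eu c0 A0 th by (intro sum_mono mult_left_mono add_left_mono) (auto intro: divide_nonneg_pos)
  also have "\<dots> = (\<Sum>j=1..k. c j) * (A * \<theta> + (A / \<theta>) * Ph)" by (simp add: sum_distrib_right)
  also have "\<dots> \<le> 1 * (A * \<theta> + (A / \<theta>) * Ph)"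
    using geo_sum[of \<beta>1 k] b1 A0 th Ph0 unfolding c_def
    by (intro mult_right_mono) (auto intro!: add_nonneg_nonneg)
  also have "\<dots> = sqrt (real CARD('n)) * (\<theta> + Phat k / \<theta>) / sqrt (1 - \<beta>2)"
    using th by (simp add: A_def Ph_def add_divide_distrib distrib_left)
  finally have I: "integral\<^sup>L Mp g \<le> sqrt (real CARD('n)) * (\<theta> + Phat k / \<theta>) / sqrt (1 - \<beta>2)" .
  have "(\<integral>\<^sup>+\<omega>. ennreal (\<Sum>i\<in>UNIV. (ms k \<omega> $ i)\<^sup>2 / sqrt (vhs k \<omega> $ i)) \<partial>Mp) \<le> (\<integral>\<^sup>+\<omega>. ennreal (g \<omega>) \<partial>Mp)"
    using pw by (intro nn_integral_mono ennreal_leI)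
  also have "\<dots> = ennreal (integral\<^sup>L Mp g)" using intg g0 by (intro nn_integral_eq_integral) auto
  also have "\<dots> \<le> ennreal (sqrt (real CARD('n)) * (\<theta> + Phat k / \<theta>) / sqrt (1 - \<beta>2))"
    using I by (rule ennreal_leI)
  finally show "(\<integral>\<^sup>+\<omega>. ennreal (\<Sum>i\<in>UNIV. \<bar>sqrt (vhs k \<omega> $ i)\<bar>) \<partial>Mp)
              \<le> ennreal (real CARD('n) * \<theta>)
         \<and> (\<integral>\<^sup>+\<omega>. ennreal (\<Sum>i\<in>UNIV. (ms k \<omega> $ i)\<^sup>2 / sqrt (vhs k \<omega> $ i)) \<partial>Mp)
              \<le> ennreal (sqrt (real CARD('n)) * (\<theta> + Phat k / \<theta>) / sqrt (1 - \<beta>2))"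
    using P1 by simp
qed

end
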